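(* Let $X,Y,Z$ be complex Banach spaces, $\emptyset\ne I\subseteq\mathbb R^n$, let $\mathbb D\subseteq I$ be unbounded, let $\mathcal B$ be a non-empty collection of non-empty subsets of $X$ such that every $x\in X$ belongs to some $B\in\mathcal B$, and let $\mathrm R$ be a non-empty collection of sequences in $\mathbb R^n$ with $\mathbf t+\mathbf b(l)\in I$ whenever $\mathbf t\in I$, $\mathbf b\in\mathrm R$, $l\in\mathbb N$. Suppose $F_0:I\times X\to Y$ is $(\mathrm R,\mathcal B)$-multi-almost periodic, $Q_0\in C_{0,\mathbb D,\mathcal B}(I\times X:Y)$ and $F=F_0+Q_0$ on $I\times X$. Suppose $G_1:I\times Y\to Z$ is $(\mathrm R',\mathcal B')$-multi-almost periodic, where $\mathrm R'$ consists of all sequences from $\mathrm R$ and all their subsequences and $\mathcal B':=\{\bigcup_{\mathbf t\in I}F_0(\mathbf t;B):B\in\mathcal B\}$; $Q_1\in C_{0,\mathbb D,\mathcal B_1}(I\times Y:Z)$ with $\mathcal B_1:=\{\bigcup_{\mathbf t\in I}F(\mathbf t;B):B\in\mathcal B\}$; and $G=G_1+Q_1$ on $I\times Y$. If there exists $L>0$ with $\|G_1(\mathbf t;x)-G_1(\mathbf t;y)\|_Z\le L\|x-y\|_Y$ for all $\mathbf t\in I$, $x,y\in Y$, then $W(\mathbf t;x):=G(\mathbf t;F(\mathbf t;x))$ is $\mathbb D$-asymptotically $(\mathrm R,\mathcal B)$-multi-almost periodic.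
   Context: For Banach spaces $U,V$ and a collection $\mathcal C$ of subsets of $U$: $C_{0,\mathbb D,\mathcal C}(I\times U:V)$ is the space of continuous $Q:I\times U\to V$ such that for every $C\in\mathcal C$, $\lim_{\mathbf t\in\mathbb D,|\mathbf t|\to\infty}Q(\mathbf t;u)=0$ uniformly for $u\in C$. A continuous $H:I\times U\to V$ is $(\mathrm S,\mathcal C)$-multi-almost periodic (for a collection $\mathrm S$ of sequences in $\mathbb R^n$ with $\mathbf t+\mathbf b(l)\in I$ for $\mathbf t\in I$, $\mathbf b\in\mathrm S$) if for every $C\in\mathcal C$ and $(\mathbf b_k)\in\mathrm S$ there exist a subsequence $(\mathbf b_{k_l})$ and $H^\ast$ with $H(\mathbf t+\mathbf b_{k_l};u)\to H^\ast(\mathbf t;u)$ uniformly for $u\in C$, $\mathbf t\in I$. $W:I\times X\to Z$ is $\mathbb D$-asymptotically $(\mathrm R,\mathcal B)$-multi-almost periodic if $W=G'+Q'$ with $G'$ $(\mathrm R,\mathcal B)$-multi-almost periodic and $Q'\in C_{0,\mathbb D,\mathcal B}(I\times X:Z)$. *)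

theory Defs
  imports "HOL-Analysis.Analysis"
begin

definition C0D ::
  "(real^'n::finite) set \<Rightarrow> (real^'n) set \<Rightarrow> 'u::real_normed_vector set set
   \<Rightarrow> (real^'n \<Rightarrow> 'u \<Rightarrow> 'v::real_normed_vector) \<Rightarrow> bool" where
  "C0D I D \<C> Q \<longleftrightarrow>
     continuous_on (I \<times> UNIV) (\<lambda>(t, u). Q t u) \<and>
     (\<forall>C\<in>\<C>. \<forall>\<epsilon>>0. \<exists>M. \<forall>t\<in>D. norm t \<ge> M \<longrightarrow> (\<forall>u\<in>C. norm (Q t u) < \<epsilon>))"

definition multi_almost_periodic ::
  "(real^'n::finite) set \<Rightarrow> (nat \<Rightarrow> real^'n) set \<Rightarrow> 'u::real_normed_vector set set
   \<Rightarrow> (real^'n \<Rightarrow> 'u \<Rightarrow> 'v::real_normed_vector) \<Rightarrow> bool" where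
  "multi_almost_periodic I S \<C> H \<longleftrightarrow>
     continuous_on (I \<times> UNIV) (\<lambda>(t, u). H t u) \<and>
     (\<forall>C\<in>\<C>. \<forall>b\<in>S. \<exists>(r::nat \<Rightarrow> nat) Hs. strict_mono r \<and>
        (\<forall>\<epsilon>>0. \<exists>N. \<forall>l\<ge>N. \<forall>t\<in>I. \<forall>u\<in>C. dist (H (t + b (r l)) u) (Hs t u) < \<epsilon>))"

definition asymp_multi_almost_periodic ::
  "(real^'n::finite) set \<Rightarrow> (real^'n) set \<Rightarrow> (nat \<Rightarrow> real^'n) set \<Rightarrow> 'u::real_normed_vector set set
   \<Rightarrow> (real^'n \<Rightarrow> 'u \<Rightarrow> 'v::real_normed_vector) \<Rightarrow> bool" where
  "asymp_multi_almost_periodic I D R \<B> W \<longleftrightarrow>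
     (\<exists>G' Q'. multi_almost_periodic I R \<B> G' \<and> C0D I D \<B> Q' \<and>
        (\<forall>t\<in>I. \<forall>x. W t x = G' t x + Q' t x))"

end

theory Submission
  imports Defs
begin

lemma unif_cauchy2:
  fixes f :: "nat \<Rightarrow> 'a \<Rightarrow> 'b \<Rightarrow> 'c::banach"
  assumes "\<forall>e>0. \<exists>N. \<forall>l\<ge>N. \<forall>m\<ge>N. \<forall>t\<in>S. \<forall>u\<in>T. dist (f l t u) (f m t u) < e"
  shows "\<exists>H. \<forall>e>0. \<exists>N. \<forall>l\<ge>N. \<forall>t\<in>S. \<forall>u\<in>T. dist (f l t u) (H t u) < e"
proof -
  have "uniformly_Cauchy_on (S \<times> T) (\<lambda>l p. f l (fst p) (snd p))"
    unfolding uniformly_Cauchy_on_def using assms by fastforce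
  then obtain H' where H': "uniform_limit (S \<times> T) (\<lambda>l p. f l (fst p) (snd p)) H' sequentially"
    using Cauchy_uniformly_convergent uniformly_convergent_on_def by blast
  show ?thesis
  proof (intro exI[of _ "\<lambda>t u. H' (t, u)"] allI impI)
    fix e :: real assume "e > 0"
    then have "\<forall>\<^sub>F n in sequentially. \<forall>p\<in>S \<times> T. dist (f n (fst p) (snd p)) (H' p) < e"
      using H' unfolding uniform_limit_iff by blast
    then obtain N where "\<forall>n\<ge>N. \<forall>p\<in>S \<times> T. dist (f n (fst p) (snd p)) (H' p) < e"
      unfolding eventually_sequentially by blast
    then show "\<exists>N. \<forall>l\<ge>N. \<forall>t\<in>S. \<forall>u\<in>T. dist (f l t u) (H' (t, u)) < e"
      by force
  qed
qed

theorem theorem2p48: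
  fixes I D :: "(real^'n) set"
    and \<B> :: "'x::banach set set"
    and R :: "(nat \<Rightarrow> real^'n) set"
    and F0 Q0 F :: "real^'n \<Rightarrow> 'x \<Rightarrow> 'y::banach"
    and G1 Q1 G :: "real^'n \<Rightarrow> 'y \<Rightarrow> 'z::banach"
    and L :: real
  assumes "I \<noteq> {}" and "D \<subseteq> I" and "\<not> bounded D"
    and "\<B> \<noteq> {}" and "\<forall>B\<in>\<B>. B \<noteq> {}" and "\<forall>x. \<exists>B\<in>\<B>. x \<in> B"
    and "R \<noteq> {}" and "\<forall>t\<in>I. \<forall>b\<in>R. \<forall>l. t + b l \<in> I"
    and "multi_almost_periodic I R \<B> F0"
    and "C0D I D \<B> Q0"
    and "\<forall>t\<in>I. \<forall>x. F t x = F0 t x + Q0 t x"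
    and "multi_almost_periodic I {b \<circ> r | b (r::nat \<Rightarrow> nat). b \<in> R \<and> strict_mono r}
           {(\<Union>t\<in>I. F0 t ` B) | B. B \<in> \<B>} G1"
    and "C0D I D {(\<Union>t\<in>I. F t ` B) | B. B \<in> \<B>} Q1"
    and "\<forall>t\<in>I. \<forall>y. G t y = G1 t y + Q1 t y"
    and "L > 0" and "\<forall>t\<in>I. \<forall>x y. norm (G1 t x - G1 t y) \<le> L * norm (x - y)"
  shows "asymp_multi_almost_periodic I D R \<B> (\<lambda>t x. G t (F t x))"
proof -
  note A = assms
  have F0c: "continuous_on (I \<times> UNIV) (\<lambda>(t, u). F0 t u)" using A(9) unfolding multi_almost_periodic_def by blast
  have G1c: "continuous_on (I \<times> UNIV) (\<lambda>(t, u). G1 t u)" using A(12) unfolding multi_almost_periodic_def by blast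
  have Q0c: "continuous_on (I \<times> UNIV) (\<lambda>(t, u). Q0 t u)" using A(10) unfolding C0D_def by blast
  have Q1c: "continuous_on (I \<times> UNIV) (\<lambda>(t, u). Q1 t u)" using A(13) unfolding C0D_def by blast
  have Lip: "norm (G1 t x - G1 t y) \<le> L * norm (x - y)" if "t \<in> I" for t x y using A(16) that by blast
  define G' where "G' = (\<lambda>t x. G1 t (F0 t x))"
  define Q' where "Q' = (\<lambda>t x. G1 t (F0 t x + Q0 t x) - G1 t (F0 t x) + Q1 t (F0 t x + Q0 t x))"
  have comp: "continuous_on (I \<times> UNIV) (\<lambda>(t, u). H t (K t u))"
    if Hc: "continuous_on (I \<times> UNIV) (\<lambda>(t, u). H t u)" and Kc: "continuous_on (I \<times> UNIV) (\<lambda>(t, u). K t u)"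
    for H :: "real^'n \<Rightarrow> 'y \<Rightarrow> 'z" and K :: "real^'n \<Rightarrow> 'x \<Rightarrow> 'y"
  proof -
    have "continuous_on (I \<times> UNIV) (\<lambda>p. (fst p, (\<lambda>(t, u). K t u) p))"
      by (intro continuous_intros Kc)
    moreover have "(\<lambda>p. (fst p, (\<lambda>(t, u). K t u) p)) ` (I \<times> UNIV) \<subseteq> I \<times> UNIV" by auto
    ultimately have "continuous_on (I \<times> UNIV) ((\<lambda>(t, u). H t u) \<circ> (\<lambda>p. (fst p, (\<lambda>(t, u). K t u) p)))"
      using continuous_on_compose continuous_on_subset Hc by blast
    then show ?thesis by (simp add: o_def case_prod_beta)
  qed
  have FQc: "continuous_on (I \<times> UNIV) (\<lambda>(t, u). F0 t u + Q0 t u)"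
  proof -
    have "continuous_on (I \<times> UNIV) (\<lambda>p. (\<lambda>(t, u). F0 t u) p + (\<lambda>(t, u). Q0 t u) p)"
      by (intro continuous_intros F0c Q0c)
    then show ?thesis by (simp add: case_prod_beta)
  qed
  have G'c: "continuous_on (I \<times> UNIV) (\<lambda>(t, u). G' t u)"
    unfolding G'_def by (rule comp[OF G1c F0c])
  have Q'c: "continuous_on (I \<times> UNIV) (\<lambda>(t, u). Q' t u)"
  proof -
    have c1: "continuous_on (I \<times> UNIV) (\<lambda>(t, u). G1 t (F0 t u + Q0 t u))"
      by (rule comp[OF G1c FQc])
    have c2: "continuous_on (I \<times> UNIV) (\<lambda>(t, u). Q1 t (F0 t u + Q0 t u))"
      by (rule comp[OF Q1c FQc])
    have "continuous_on (I \<times> UNIV) (\<lambda>p. (\<lambda>(t, u). G1 t (F0 t u + Q0 t u)) p - (\<lambda>(t, u). G' t u) p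
         + (\<lambda>(t, u). Q1 t (F0 t u + Q0 t u)) p)"
      by (intro continuous_intros c1 c2 G'c)
    then show ?thesis unfolding Q'_def G'_def by (simp add: case_prod_beta)
  qed
  have eq: "\<forall>t\<in>I. \<forall>x. G t (F t x) = G' t x + Q' t x"
    using A(11) A(14) unfolding G'_def Q'_def by simp
  have Q'0: "C0D I D \<B> Q'"
    unfolding C0D_def
  proof (intro conjI Q'c ballI allI impI)
    fix B e assume B: "B \<in> \<B>" and e: "(e::real) > 0"
    obtain M1 where M1: "\<forall>t\<in>D. norm t \<ge> M1 \<longrightarrow> (\<forall>u\<in>B. norm (Q0 t u) < e / (2 * L))"
      using A(10) B e A(15) unfolding C0D_def by (meson divide_pos_pos zero_less_mult_iff zero_less_numeral)
    have Bc: "(\<Union>t\<in>I. F t ` B) \<in> {(\<Union>t\<in>I. F t ` B) | B. B \<in> \<B>}" using B by blast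
    obtain M2 where M2: "\<forall>t\<in>D. norm t \<ge> M2 \<longrightarrow> (\<forall>y\<in>(\<Union>t\<in>I. F t ` B). norm (Q1 t y) < e / 2)"
      using A(13) Bc e unfolding C0D_def by (meson half_gt_zero)
    show "\<exists>M. \<forall>t\<in>D. M \<le> norm t \<longrightarrow> (\<forall>u\<in>B. norm (Q' t u) < e)"
    proof (intro exI[of _ "max M1 M2"] ballI impI)
      fix t u assume t: "t \<in> D" and tn: "max M1 M2 \<le> norm t" and u: "u \<in> B"
      have tI: "t \<in> I" using t A(2) by blast
      have h1: "norm (Q0 t u) < e / (2 * L)" using M1 t tn u by auto
      have "F t u \<in> (\<Union>t\<in>I. F t ` B)" using tI u by blast
      then have h2: "norm (Q1 t (F0 t u + Q0 t u)) < e / 2" using M2 t tn A(11) tI by auto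
      have h3: "norm (G1 t (F0 t u + Q0 t u) - G1 t (F0 t u)) \<le> L * norm (Q0 t u)"
        using Lip[OF tI, of "F0 t u + Q0 t u" "F0 t u"] by simp
      have "L * norm (Q0 t u) < L * (e / (2 * L))" by (rule mult_strict_left_mono[OF h1 A(15)])
      also have "\<dots> = e / 2" using A(15) by simp
      finally have h4: "norm (G1 t (F0 t u + Q0 t u) - G1 t (F0 t u)) < e / 2" using h3 by linarith
      have "norm (Q' t u) \<le> norm (G1 t (F0 t u + Q0 t u) - G1 t (F0 t u)) + norm (Q1 t (F0 t u + Q0 t u))"
        unfolding Q'_def by (rule norm_triangle_ineq)
      then show "norm (Q' t u) < e" using h2 h4 by linarith
    qed
  qed
  have G'ap: "multi_almost_periodic I R \<B> G'"
    unfolding multi_almost_periodic_def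
  proof (intro conjI G'c ballI)
    fix B b assume B: "B \<in> \<B>" and b: "b \<in> R"
    obtain r1 F0s where r1: "strict_mono (r1::nat\<Rightarrow>nat)"
      and F0s: "\<forall>\<epsilon>>0. \<exists>N. \<forall>l\<ge>N. \<forall>t\<in>I. \<forall>u\<in>B. dist (F0 (t + b (r1 l)) u) (F0s t u) < \<epsilon>"
      using A(9) B b unfolding multi_almost_periodic_def by blast
    define C where "C = (\<Union>t\<in>I. F0 t ` B)"
    have C: "C \<in> {(\<Union>t\<in>I. F0 t ` B) | B. B \<in> \<B>}" using B C_def by blast
    have br: "b \<circ> r1 \<in> {b \<circ> r | b (r::nat \<Rightarrow> nat). b \<in> R \<and> strict_mono r}" using b r1 by blast
    obtain r2 G1s where r2: "strict_mono (r2::nat\<Rightarrow>nat)"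
      and G1s: "\<forall>\<epsilon>>0. \<exists>N. \<forall>l\<ge>N. \<forall>t\<in>I. \<forall>y\<in>C. dist (G1 (t + (b \<circ> r1) (r2 l)) y) (G1s t y) < \<epsilon>"
      using A(12) C br unfolding multi_almost_periodic_def by blast
    define c where "c = (\<lambda>l. b (r1 (r2 l)))"
    have cI: "t + c l \<in> I" if "t \<in> I" for t l using A(8) that b c_def by blast
    have cauchy: "\<forall>e>0. \<exists>N. \<forall>l\<ge>N. \<forall>m\<ge>N. \<forall>t\<in>I. \<forall>u\<in>B.
        dist (G' (t + c l) u) (G' (t + c m) u) < e"
    proof (intro allI impI)
      fix e :: real assume e: "e > 0"
      have e1: "e / (4 * L) > 0" using e A(15) by simp
      obtain N1 where N1: "\<forall>l\<ge>N1. \<forall>t\<in>I. \<forall>u\<in>B. dist (F0 (t + b (r1 l)) u) (F0s t u) < e / (4 * L)"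
        using F0s e1 by blast
      obtain N2 where N2: "\<forall>l\<ge>N2. \<forall>t\<in>I. \<forall>y\<in>C. dist (G1 (t + c l) y) (G1s t y) < e / 4"
        using G1s e unfolding c_def o_def by (meson divide_pos_pos zero_less_numeral)
      show "\<exists>N. \<forall>l\<ge>N. \<forall>m\<ge>N. \<forall>t\<in>I. \<forall>u\<in>B. dist (G' (t + c l) u) (G' (t + c m) u) < e"
      proof (intro exI[of _ "max N1 N2"] allI impI ballI)
        fix l m t u assume l: "max N1 N2 \<le> l" and m: "max N1 N2 \<le> m" and t: "t \<in> I" and u: "u \<in> B"
        have "r2 l \<ge> l" "r2 m \<ge> m" using r2 seq_suble by auto
        then have "r2 l \<ge> N1" "r2 m \<ge> N1" using l m by auto
        then have d1: "dist (F0 (t + c l) u) (F0s t u) < e / (4 * L)"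
          and d2: "dist (F0 (t + c m) u) (F0s t u) < e / (4 * L)"
          using N1 t u unfolding c_def by auto
        have d3: "dist (F0 (t + c l) u) (F0 (t + c m) u) < e / (2 * L)"
        proof -
          have "dist (F0 (t + c l) u) (F0 (t + c m) u) \<le> dist (F0 (t + c l) u) (F0s t u) + dist (F0 (t + c m) u) (F0s t u)"
            by (rule dist_triangle2)
          also have "\<dots> < e / (4 * L) + e / (4 * L)" using d1 d2 by linarith
          also have "\<dots> = e / (2 * L)" by (simp add: field_simps)
          finally show ?thesis .
        qed
        define y where "y = F0 (t + c m) u"
        have yC: "y \<in> C" unfolding y_def C_def using cI[OF t] u by blast
        have d4: "dist (G1 (t + c l) y) (G1 (t + c m) y) < e / 2"
        proof -
          have "dist (G1 (t + c l) y) (G1 (t + c m) y) \<le> dist (G1 (t + c l) y) (G1s t y) + dist (G1 (t + c m) y) (G1s t y)"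
            by (rule dist_triangle2)
          also have "\<dots> < e / 4 + e / 4" using N2 l m t yC by (smt (verit, ccfv_SIG) max.bounded_iff)
          finally show ?thesis by simp
        qed
        have d5: "dist (G1 (t + c l) (F0 (t + c l) u)) (G1 (t + c l) y) < e / 2"
        proof -
          have "dist (G1 (t + c l) (F0 (t + c l) u)) (G1 (t + c l) y) \<le> L * dist (F0 (t + c l) u) y"
            using Lip[OF cI[OF t]] by (simp add: dist_norm)
          also have "\<dots> < L * (e / (2 * L))" unfolding y_def by (rule mult_strict_left_mono[OF d3 A(15)])
          also have "\<dots> = e / 2" using A(15) by simp
          finally show ?thesis .
        qed
        have "dist (G' (t + c l) u) (G' (t + c m) u) \<le> dist (G1 (t + c l) (F0 (t + c l) u)) (G1 (t + c l) y) + dist (G1 (t + c l) y) (G1 (t + c m) y)"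
          unfolding G'_def y_def by (rule dist_triangle)
        then show "dist (G' (t + c l) u) (G' (t + c m) u) < e" using d4 d5 by linarith
      qed
    qed
    obtain Hs where Hs: "\<forall>e>0. \<exists>N. \<forall>l\<ge>N. \<forall>t\<in>I. \<forall>u\<in>B. dist (G' (t + c l) u) (Hs t u) < e"
      using unif_cauchy2[OF cauchy] by blast
    have "strict_mono (r1 \<circ> r2)" using r1 r2 by (simp add: strict_mono_def)
    then show "\<exists>(r::nat \<Rightarrow> nat) Hs. strict_mono r \<and>
        (\<forall>\<epsilon>>0. \<exists>N. \<forall>l\<ge>N. \<forall>t\<in>I. \<forall>u\<in>B. dist (G' (t + b (r l)) u) (Hs t u) < \<epsilon>)"
      using Hs unfolding c_def by (intro exI[of _ "r1 \<circ> r2"] exI[of _ Hs]) simp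
  qed
  show ?thesis
    unfolding asymp_multi_almost_periodic_def using G'ap Q'0 eq by blast
qed

end
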